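(* Let $n\ge1$, let $\Omega$ be an open subset of $\mathbb{R}^n$, and let $p\in[1,\infty)$ and $T>0$ be constants. Suppose $u\in L^p(\Omega\times(0,T))$ and $u(x,t)=\int_{\mathbb{R}^n}\Phi(x-y,t)\,d\mu(y)$ for some finite positive Borel measure $\mu$ on $\mathbb{R}^n$. Then for each compact subset $K$ of $\Omega$, $$\max_{x\in K}u(x,t)=o\big(t^{-\frac{n+2}{2p}}\big)\quad\text{as }t\to0^+.$$
   Context: $\Phi$ is the heat kernel: $\Phi(x,t)=(4\pi t)^{-n/2}e^{-|x|^2/(4t)}$ for $t>0$ and $\Phi(x,t)=0$ for $t\le0$. *)

theory Defs
  imports "HOL-Analysis.Analysis" "HOL-Library.Landau_Symbols"
begin

definition heat_kernel :: "real^'n \<Rightarrow> real \<Rightarrow> real" where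
  "heat_kernel x t = (if t > 0
     then (4 * pi * t) powr (- real CARD('n) / 2) * exp (- (norm x)\<^sup>2 / (4 * t))
     else 0)"

end

theory Submission imports Defs begin

lemma hk_nonneg: "heat_kernel x t \<ge> 0"
  unfolding heat_kernel_def by auto

lemma hk_le: "t > 0 \<Longrightarrow> heat_kernel (x::real^'n) t \<le> (4 * pi * t) powr (- (real CARD('n) / 2))"
  unfolding heat_kernel_def by (auto intro!: mult_left_le)

lemma hk_meas: "(\<lambda>w. heat_kernel (fst w :: real^'n) (snd w)) \<in> borel_measurable (borel \<Otimes>\<^sub>M borel)"
  unfolding heat_kernel_def by measurable

lemma sq_sum_le: "((a::real) + b)\<^sup>2 \<le> 2 * a\<^sup>2 + 2 * b\<^sup>2"
proof -
  have "0 \<le> (a - b)\<^sup>2" by simp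
  thus ?thesis by (simp add: power2_diff power2_sum)
qed

lemma hk_compare:
  fixes x y z :: "real^'n"
  assumes t: "t > 0" and s: "2*t \<le> s" "s \<le> 3*t" and d: "(norm (x - y))\<^sup>2 \<le> t"
  shows "heat_kernel (x - z) t \<le> (3 powr (real CARD('n) / 2) * exp (1/4)) * heat_kernel (y - z) s"
proof -
  define n where "n = real CARD('n)"
  have sp: "s > 0" using t s by linarith
  have "norm (y - z) \<le> norm (x - z) + norm (x - y)"
    using norm_triangle_ineq[of "x - z" "y - x"] by (simp add: norm_minus_commute)
  hence "(norm (y - z))\<^sup>2 \<le> (norm (x - z) + norm (x - y))\<^sup>2"
    by (intro power_mono) auto
  also have "\<dots> \<le> 2 * (norm (x - z))\<^sup>2 + 2 * (norm (x - y))\<^sup>2"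
    by (rule sq_sum_le)
  finally have yz: "(norm (y - z))\<^sup>2 \<le> 2 * (norm (x - z))\<^sup>2 + 2 * t" using d by linarith
  have e1: "(norm (y - z))\<^sup>2 / (4 * s) \<le> (norm (x - z))\<^sup>2 / (4 * t) + 1/4"
  proof -
    have "(norm (y - z))\<^sup>2 / (4 * s) \<le> (norm (y - z))\<^sup>2 / (8 * t)"
      using s t by (intro divide_left_mono) auto
    also have "\<dots> \<le> (2 * (norm (x - z))\<^sup>2 + 2 * t) / (8 * t)"
      using yz t by (intro divide_right_mono) auto
    also have "\<dots> = (norm (x - z))\<^sup>2 / (4 * t) + 1/4" using t by (simp add: field_simps)
    finally show ?thesis .
  qed
  have ex: "exp (- (norm (x - z))\<^sup>2 / (4 * t)) \<le> exp (1/4) * exp (- (norm (y - z))\<^sup>2 / (4 * s))"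
    using e1 by (simp add: exp_add[symmetric])
  have pw: "(4 * pi * t) powr (- n / 2) \<le> 3 powr (n / 2) * (4 * pi * s) powr (- n / 2)"
  proof -
    have "(4 * pi * t) powr (- n / 2) = (4 * pi * t) powr (-n/2) * ((4 * pi * s) powr (n/2) * (4 * pi * s) powr (-n/2))"
      using sp by (simp add: powr_add[symmetric])
    also have "\<dots> = ((4 * pi * s) / (4 * pi * t)) powr (n/2) * (4 * pi * s) powr (-n/2)"
      using t sp by (simp add: powr_divide powr_minus powr_mult field_simps)
    also have "\<dots> \<le> 3 powr (n/2) * (4 * pi * s) powr (-n/2)"
      using t sp s unfolding n_def by (intro mult_right_mono powr_mono2) (auto simp: field_simps)
    finally show ?thesis .
  qed
  have "heat_kernel (x - z) t = (4 * pi * t) powr (- n / 2) * exp (- (norm (x - z))\<^sup>2 / (4 * t))"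
    using t unfolding heat_kernel_def n_def by simp
  also have "\<dots> \<le> (3 powr (n / 2) * (4 * pi * s) powr (- n / 2)) * (exp (1/4) * exp (- (norm (y - z))\<^sup>2 / (4 * s)))"
    using pw ex by (intro mult_mono) auto
  also have "\<dots> = (3 powr (n / 2) * exp (1/4)) * heat_kernel (y - z) s"
    using sp unfolding heat_kernel_def n_def by simp
  finally show ?thesis unfolding n_def .
qed


lemma v_meas:
  fixes \<mu> :: "(real^'n) measure"
  assumes "sets \<mu> = sets borel" and "finite_measure \<mu>"
  shows "(\<lambda>z. \<integral>y. heat_kernel (fst z - y) (snd z) \<partial>\<mu>) \<in> borel_measurable (lborel :: ((real^'n) \<times> real) measure)"
proof -
  interpret finite_measure \<mu> by fact
  have hk: "(\<lambda>w. heat_kernel (fst w :: real^'n) (snd w)) \<in> borel_measurable borel"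
    using hk_meas by (simp add: borel_prod)
  have c: "(\<lambda>w::(((real^'n) \<times> real) \<times> (real^'n)). (fst (fst w) - snd w, snd (fst w))) \<in> borel \<rightarrow>\<^sub>M borel"
    by (intro borel_measurable_continuous_onI continuous_intros)
  have m1: "(\<lambda>w::(((real^'n) \<times> real) \<times> (real^'n)). heat_kernel (fst (fst w) - snd w) (snd (fst w))) \<in> borel_measurable borel"
    using measurable_comp[OF c hk] by (simp add: o_def)
  hence "(\<lambda>w::(((real^'n) \<times> real) \<times> (real^'n)). heat_kernel (fst (fst w) - snd w) (snd (fst w))) \<in> borel_measurable (lborel \<Otimes>\<^sub>M \<mu>)"
  proof -
    have e: "sets (lborel \<Otimes>\<^sub>M \<mu>) = sets (borel :: (((real^'n) \<times> real) \<times> (real^'n)) measure)"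
    proof -
      have "sets (lborel \<Otimes>\<^sub>M \<mu>) = sets (borel \<Otimes>\<^sub>M (borel :: (real^'n) measure) :: (((real^'n) \<times> real) \<times> (real^'n)) measure)"
        by (rule sets_pair_measure_cong) (simp_all add: assms(1))
      thus ?thesis by (simp only: borel_prod)
    qed
    show ?thesis unfolding measurable_cong_sets[OF e refl] by (rule m1)
  qed
  hence "case_prod (\<lambda>z y. heat_kernel (fst z - y) (snd z)) \<in> borel_measurable (lborel \<Otimes>\<^sub>M \<mu>)"
    by (simp add: case_prod_beta')
  thus ?thesis by (rule borel_measurable_lebesgue_integral)
qed


theorem lemma2p4:
  fixes \<Omega> :: "(real^'n) set"
    and \<mu> :: "(real^'n) measure"
    and u :: "real^'n \<Rightarrow> real \<Rightarrow> real"
    and p T :: real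
    and K :: "(real^'n) set"
  assumes "open \<Omega>"
    and "p \<ge> 1" and "T > 0"
    and "sets \<mu> = sets borel" and "finite_measure \<mu>"
    and "\<And>x t. x \<in> \<Omega> \<Longrightarrow> 0 < t \<Longrightarrow> t < T \<Longrightarrow>
           u x t = (\<integral>y. heat_kernel (x - y) t \<partial>\<mu>)"
    and "(\<integral>\<^sup>+ z \<in> \<Omega> \<times> {0<..<T}. ennreal (\<bar>u (fst z) (snd z)\<bar> powr p) \<partial>lborel) < \<infinity>"
    and "compact K" and "K \<subseteq> \<Omega>" and "K \<noteq> {}"
  shows "(\<lambda>t. SUP x\<in>K. u x t) \<in> o[at_right 0](\<lambda>t. t powr (- (real CARD('n) + 2) / (2 * p)))"
proof -
  interpret finite_measure \<mu> by fact
  note u_eq = assms(6)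
  have p0: "p > 0" using assms(2) by linarith
  define n where "n = real CARD('n)"
  define v where "v x t = (\<integral>y. heat_kernel (x - y) t \<partial>\<mu>)" for x :: "real^'n" and t
  define A where "A = 3 powr (n / 2) * exp (1/4)"
  have A0: "A > 0" unfolding A_def by simp
  obtain d where d0: "d > 0" and dK: "(\<Union>x\<in>K. ball x d) \<subseteq> \<Omega>"
    using compact_subset_open_imp_ball_epsilon_subset[OF assms(8,1,9)] by blast
  have meas_y: "(\<lambda>y. heat_kernel (x - y) t) \<in> borel_measurable \<mu>" for x :: "real^'n" and t
  proof -
    have "(\<lambda>y. heat_kernel (x - y) t) \<in> borel_measurable borel"
    proof -
      have c: "(\<lambda>y::real^'n. (x - y, t)) \<in> borel \<rightarrow>\<^sub>M borel"
        by (intro borel_measurable_continuous_onI continuous_intros)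
      have hk: "(\<lambda>w. heat_kernel (fst w :: real^'n) (snd w)) \<in> borel_measurable borel"
        using hk_meas by (simp add: borel_prod)
      show ?thesis using measurable_comp[OF c hk] by (simp add: o_def)
    qed
    thus ?thesis unfolding measurable_cong_sets[OF assms(4) refl] .
  qed
  have integ: "integrable \<mu> (\<lambda>y. heat_kernel (x - y) t)" if "t > 0" for x :: "real^'n" and t
    by (rule integrable_const_bound[where B="(4 * pi * t) powr (- (real CARD('n) / 2))"])
       (auto intro!: AE_I2 meas_y simp: abs_of_nonneg hk_nonneg hk_le that)
  have v_nonneg: "v x t \<ge> 0" for x t
    unfolding v_def by (intro integral_nonneg_AE) (simp add: hk_nonneg)
  have harnack: "v x t \<le> A * v y s" if "t > 0" "2*t \<le> s" "s \<le> 3*t" "(norm (x - y))\<^sup>2 \<le> t" for x y t s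
  proof -
    have s0: "s > 0" using that by linarith
    have "v x t \<le> (\<integral>z. A * heat_kernel (y - z) s \<partial>\<mu>)"
      unfolding v_def using that s0
      by (intro integral_mono integ integrable_mult_right) (auto simp: A_def n_def intro!: hk_compare)
    also have "\<dots> = A * v y s" unfolding v_def by simp
    finally show ?thesis .
  qed
  define S where "S k = \<Omega> \<times> {0<..<T / real (Suc k)}" for k :: nat
  define h where "h k z = indicator (S k) z * ennreal (\<bar>v (fst z) (snd z)\<bar> powr p)" for k z
  have S_open: "open (S k)" for k unfolding S_def by (intro open_Times assms(1)) auto
  have S_sets: "S k \<in> sets lborel" for k using S_open by simp
  have vmeas: "(\<lambda>z. v (fst z) (snd z)) \<in> borel_measurable lborel"
    unfolding v_def using v_meas[OF assms(4,5)] by simp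
  have h_meas: "h k \<in> borel_measurable lborel" for k
    unfolding h_def using vmeas S_sets by measurable
  have S_sub: "S k \<subseteq> S 0" for k
  proof -
    have "T / real (Suc k) \<le> T / real (Suc 0)" using assms(3) by (intro divide_left_mono) auto
    thus ?thesis unfolding S_def by auto
  qed
  have h_dec: "decseq h"
  proof (intro decseq_SucI le_funI)
    fix k z
    have "T / real (Suc (Suc k)) \<le> T / real (Suc k)" using assms(3) by (intro divide_left_mono) auto
    hence "S (Suc k) \<subseteq> S k" unfolding S_def by auto
    thus "h (Suc k) z \<le> h k z" unfolding h_def by (auto simp: indicator_def)
  qed
  have h0_fin: "(\<integral>\<^sup>+ z. h 0 z \<partial>lborel) < \<infinity>"
  proof -
    have "(\<integral>\<^sup>+ z. h 0 z \<partial>lborel) = (\<integral>\<^sup>+ z \<in> \<Omega> \<times> {0<..<T}. ennreal (\<bar>u (fst z) (snd z)\<bar> powr p) \<partial>lborel)"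
      unfolding h_def S_def
      by (intro nn_integral_cong) (auto simp: indicator_def u_eq v_def mem_Times_iff)
    thus ?thesis using assms(7) by simp
  qed
  have h_fin: "(\<integral>\<^sup>+ z. h k z \<partial>lborel) < \<infinity>" for k
  proof -
    have "(\<integral>\<^sup>+ z. h k z \<partial>lborel) \<le> (\<integral>\<^sup>+ z. h 0 z \<partial>lborel)"
      using h_dec[THEN decseqD, of 0 k] by (intro nn_integral_mono) (auto simp: le_fun_def)
    thus ?thesis using h0_fin by (rule le_less_trans)
  qed
  have INF0: "(\<lambda>z. INF k. h k z) = (\<lambda>z. 0)"
  proof
    fix z :: "(real^'n) \<times> real"
    show "(INF k. h k z) = 0"
    proof (cases "z \<in> S 0")
      case False
      hence "h 0 z = 0" unfolding h_def by simp
      thus ?thesis by (metis (no_types) INF_lower UNIV_I antisym zero_le)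
    next
      case True
      hence "snd z > 0" unfolding S_def by (auto simp: mem_Times_iff)
      then obtain k :: nat where k: "T / snd z < real k" using reals_Archimedean2 by blast
      have "T / real (Suc k) < snd z"
        using k \<open>snd z > 0\<close> by (simp add: field_simps)
      hence "z \<notin> S k" unfolding S_def by (auto simp: mem_Times_iff)
      hence "h k z = 0" unfolding h_def by simp
      thus ?thesis by (metis (no_types) INF_lower UNIV_I antisym zero_le)
    qed
  qed
  have INF_int: "(INF k. (\<integral>\<^sup>+ z. h k z \<partial>lborel)) = 0"
    using nn_integral_monotone_convergence_INF_decseq[OF h_dec h_meas h_fin] INF0 by simp
  define c0 where "c0 = unit_ball_vol n"
  have c00: "c0 > 0" unfolding c0_def n_def by simp
  show ?thesis
  proof (rule landau_o.smallI)
    fix \<epsilon> :: real assume \<epsilon>: "\<epsilon> > 0"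
    define \<eta> where "\<eta> = c0 * \<epsilon> powr p / A powr p"
    have \<eta>0: "\<eta> > 0" unfolding \<eta>_def using c00 \<epsilon> A0 by simp
    have "(INF k. (\<integral>\<^sup>+ z. h k z \<partial>lborel)) < ennreal \<eta>" using INF_int \<eta>0 by simp
    then obtain k where k: "(\<integral>\<^sup>+ z. h k z \<partial>lborel) < ennreal \<eta>" by (auto simp: INF_less_iff)
    define b where "b = min (T / (3 * real (Suc k))) (d\<^sup>2)"
    have b0: "b > 0" unfolding b_def using assms(3) d0 by simp
    have key: "u x t \<le> \<epsilon> * t powr (- (n + 2) / (2 * p)) \<and> 0 \<le> u x t"
      if t: "0 < t" "t < b" and x: "x \<in> K" for t x
    proof -
      have xO: "x \<in> \<Omega>" using x assms(9) by auto
      have "T / (3 * real (Suc k)) \<le> T / 1" using assms(3) by (intro divide_left_mono) auto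
      moreover have "b \<le> T / (3 * real (Suc k))" unfolding b_def by simp
      ultimately have tT: "t < T" using t by linarith
      have uv: "u x t = v x t" using u_eq[OF xO t(1) tT] unfolding v_def by simp
      define Q where "Q = ball x (sqrt t) \<times> {2*t<..<3*t}"
      have "open Q" unfolding Q_def by (intro open_Times) auto
      hence Q_sets: "Q \<in> sets lborel" by simp
      have sd: "sqrt t < d" using t d0 unfolding b_def
        by (metis min_less_iff_conj real_sqrt_abs real_sqrt_less_mono abs_of_pos)
      have tb: "3 * t < T / real (Suc k)" using t unfolding b_def by (simp add: field_simps)
      have QS: "Q \<subseteq> S k"
      proof
        fix z assume "z \<in> Q"
        then obtain y s where z: "z = (y, s)" "dist x y < sqrt t" "2*t < s" "s < 3*t"
          unfolding Q_def by (auto simp: mem_Times_iff) (metis prod.collapse)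
        have "y \<in> \<Omega>" using dK x z(2) sd by (auto simp: subset_eq)
        thus "z \<in> S k" unfolding S_def using z t tb by auto
      qed
      have pt: "v x t \<le> A * v (fst z) (snd z)" if "z \<in> Q" for z
      proof -
        have "norm (x - fst z) < sqrt t" "2*t < snd z" "snd z < 3*t"
          using that unfolding Q_def by (auto simp: mem_Times_iff dist_norm)
        moreover have "(norm (x - fst z))\<^sup>2 \<le> t"
        proof -
          have "(norm (x - fst z))\<^sup>2 < (sqrt t)\<^sup>2"
            using \<open>norm (x - fst z) < sqrt t\<close> by (intro power_strict_mono) auto
          thus ?thesis using t(1) by simp
        qed
        ultimately show ?thesis using t(1) by (intro harnack) auto
      qed
      have ineq: "ennreal (v x t powr p / A powr p) * indicator Q z \<le> h k z" for z
      proof (cases "z \<in> Q")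
        case True
        have "v x t powr p \<le> (A * v (fst z) (snd z)) powr p"
          using pt[OF True] v_nonneg p0 by (intro powr_mono2) auto
        also have "\<dots> = A powr p * v (fst z) (snd z) powr p"
          using A0 v_nonneg by (simp add: powr_mult)
        finally have "v x t powr p / A powr p \<le> \<bar>v (fst z) (snd z)\<bar> powr p"
          using A0 v_nonneg by (simp add: divide_le_eq mult.commute)
        thus ?thesis using True QS unfolding h_def by (auto simp: indicator_def)
      qed (simp add: h_def)
      have "ennreal (v x t powr p / A powr p) * emeasure lborel Q \<le> (\<integral>\<^sup>+ z. h k z \<partial>lborel)"
        using ineq by (subst nn_integral_cmult_indicator[OF Q_sets, symmetric]) (intro nn_integral_mono, simp)
      also have "\<dots> < ennreal \<eta>" by (rule k)
      finally have lt1: "ennreal (v x t powr p / A powr p) * emeasure lborel Q < ennreal \<eta>" .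
      have "emeasure lborel Q = emeasure lborel (ball x (sqrt t)) * emeasure lborel {2*t<..<3*t}"
        unfolding Q_def lborel_prod[symmetric] by (rule lborel.emeasure_pair_measure_Times) auto
      also have "\<dots> = ennreal (c0 * sqrt t ^ CARD('n)) * ennreal t"
        using t(1) unfolding c0_def n_def by (simp add: emeasure_ball)
      finally have eQ: "emeasure lborel Q = ennreal (c0 * sqrt t ^ CARD('n) * t)"
        using c00 t(1) by (simp add: ennreal_mult)
      define P where "P = t powr ((n + 2) / 2)"
      have P0: "P > 0" unfolding P_def using t by simp
      have P_eq: "sqrt t ^ CARD('n) * t = P"
      proof -
        have "sqrt t ^ CARD('n) = (t powr (1/2)) powr real CARD('n)"
          using t(1) by (simp add: powr_half_sqrt powr_realpow)
        also have "\<dots> = t powr (n / 2)" unfolding n_def by (simp add: powr_powr)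
        finally show ?thesis unfolding P_def using t(1)
          by (simp add: powr_add add_divide_distrib)
      qed
      have "ennreal (v x t powr p / A powr p * (c0 * P)) < ennreal \<eta>"
        using lt1 unfolding eQ P_eq[symmetric] using c00 t(1) A0
        by (simp add: ennreal_mult[symmetric] mult.assoc)
      hence "v x t powr p / A powr p * (c0 * P) < \<eta>"
        by (meson ennreal_leI not_less)
      hence "v x t powr p * P < \<epsilon> powr p"
        unfolding \<eta>_def using c00 A0 by (simp add: field_simps)
      hence lt2: "v x t powr p \<le> \<epsilon> powr p / P" using P0 by (simp add: field_simps)
      have "v x t = (v x t powr p) powr (1/p)"
        using v_nonneg p0 by (simp add: powr_powr)
      also have "\<dots> \<le> (\<epsilon> powr p / P) powr (1/p)"
        using lt2 p0 by (intro powr_mono2) auto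
      also have "\<dots> = (\<epsilon> powr p) powr (1/p) / P powr (1/p)"
        using \<epsilon> P0 by (simp add: powr_divide)
      also have "\<dots> = \<epsilon> / t powr ((n + 2) / (2 * p))"
        using \<epsilon> p0 unfolding P_def by (simp add: powr_powr)
      also have "\<dots> = \<epsilon> * t powr (- (n + 2) / (2 * p))"
      proof -
        have "- (n + 2) / (2 * p) = - ((n + 2) / (2 * p))" by (rule minus_divide_left[symmetric])
        hence "t powr (- (n + 2) / (2 * p)) = 1 / t powr ((n + 2) / (2 * p))"
          by (simp only: powr_minus_divide)
        thus ?thesis by simp
      qed
      finally show ?thesis using uv v_nonneg by simp
    qed
    show "\<forall>\<^sub>F t in at_right 0. norm (SUP x\<in>K. u x t) \<le> \<epsilon> * norm (t powr (- (real CARD('n) + 2) / (2 * p)))"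
      unfolding eventually_at_right_field
    proof (intro exI[of _ b] conjI allI impI)
      show "0 < b" by fact
      fix t :: real assume t: "0 < t" "t < b"
      have bdd: "bdd_above ((\<lambda>x. u x t) ` K)"
        using key[OF t] by (intro bdd_aboveI2[where M="\<epsilon> * t powr (- (n + 2) / (2 * p))"]) auto
      obtain x0 where x0: "x0 \<in> K" using assms(10) by auto
      have lo: "0 \<le> (SUP x\<in>K. u x t)"
        using key[OF t x0] cSUP_upper[OF x0 bdd] by linarith
      have hi: "(SUP x\<in>K. u x t) \<le> \<epsilon> * t powr (- (n + 2) / (2 * p))"
        using key[OF t] assms(10) by (intro cSUP_least) auto
      show "norm (SUP x\<in>K. u x t) \<le> \<epsilon> * norm (t powr (- (real CARD('n) + 2) / (2 * p)))"
        using lo hi by (simp add: n_def)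
    qed
  qed
qed

end
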